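(* Let $x_0\in C^\eta_p$ (some $\eta\in\mathbb{N}^p$) be continuous on $[-\tau,0]$, and let $x:[-\tau,T]\to\mathbb{R}^d$ be a solution with initial segment $x_0$. Let $t=mh+\varepsilon$ with $m\in\mathbb{N}$, $0<\varepsilon<h$, $t+h\le T$, and let $n=\lfloor m/p\rfloor-1$; assume $n\ge0$. Write $x_m:=x_{mh}$ and $x_{m+1}:=x_{(m+1)h}$. Let $\zeta,\zeta'\in\mathbb{N}^p$ be such that $x_m\in C^\zeta_p$ with $\zeta_i\ge n$ for all $i$, and $x_{m+1}\in C^{\zeta'}_p$. Let $\Xi'$ be a box containing $\xi_1(x_{m+1})([0,h))$, and for $i\in\{1,\dots,p\}$ let $\Xi_i$ be a box containing $\xi_i(x_m)([0,h))$, $L_i$ a box containing $x^{[n+1]}(s)$ for all $s\in[(m-i)h,(m-i+1)h)$, and $R_i$ a box containing $x^{[n+1]}(s)$ for all $s\in[(m-i+1)h,(m-i+1)h+\varepsilon]$. Then: (a) $x_t\in C^n_p$ and $x_t\in C^{n+1}([-\tau,0])$; (b) $z(x_t)\in\sum_{k=0}^{\zeta'_1} j_{1,[k]}(x_{m+1})\,\varepsilon^k+\Xi'\,\varepsilon^{\zeta'_1+1}$; (c) for $i\in\{1,\dots,p\}$ and $k\in\{0,\dots,n\}$: $j_{i,[k]}(x_t)\in\sum_{l=0}^{\zeta_i-k}\binom{k+l}{k} j_{i,[k+l]}(x_m)\,\varepsilon^l+\binom{\zeta_i+1}{k}\,\Xi_i\,\varepsilon^{\zeta_i+1-k}$; (d)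 for $i\in\{1,\dots,p\}$ and all $s\in[0,h)$: $\xi_i(x_t)(s)\in\mathrm{hull}(L_i,R_i)$.
   Context: Fix integers $d\ge1$, $p\ge1$, a delay $\tau>0$, and set $h=\tau/p$, grid points $t_i=-ih$. Let $f:\mathbb{R}^d\times\mathbb{R}^d\to\mathbb{R}^d$ be $C^\infty$ and consider the DDE $x'(t)=f(x(t),x(t-\tau))$. Segments: $x_t(s)=x(t+s)$, $s\in[-\tau,0]$. For $g$ of class $C^k$, $g^{[k]}:=g^{(k)}/k!$ (one-sided derivatives at endpoints). For $\eta\in\mathbb{N}^p$, $C^\eta_p$ is the set of $x:[-\tau,0]\to\mathbb{R}^d$ such that for each $i$ the restriction of $x$ to $[t_i,t_i+h)$ coincides with the restriction of some $\tilde x_i\in C^{\eta_i+1}([t_i,t_i+h])$; for $s\in[t_i,t_i+h)$, $x^{[k]}(s):=\tilde x_i^{[k]}(s)$ ($k\le\eta_i+1$). $C^n_p:=C^{(n,\dots,n)}_p$. For $x\in C^\eta_p$: $z(x)=x(0)$, $j_{i,[k]}(x)=x^{[k]}(t_i)$ for $0\le k\le\eta_i$, and $\xi_i(x)(s)=x^{[\eta_i+1]}(t_i+s)$ for $s\in[0,h)$ (for $C^n_p$, $\xi_i(x)(s)=x^{[n+1]}(t_i+s)$). A solution on $[-\tau,T]$ with initial segment $x_0$ is $x:[-\tau,T]\to\mathbb{R}^d$ with $x|_{[-\tau,0]}=x_0$, continuous on $[0,T]$, whose right derivative at each $t\in[0,T)$ exists and equals $f(x(t),x(t-\tau))$. A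 box is a product of $d$ compact intervals; $\mathrm{hull}(A_1,\dots,A_r)$ is the smallest box containing $A_1\cup\dots\cup A_r$; vector-plus-box and scalar-times-box are elementwise. *)

theory Defs
  imports "HOL-Analysis.Analysis"
begin

fun pdiff :: "'a::real_normed_vector list \<Rightarrow> ('a \<Rightarrow> 'b::real_normed_vector) \<Rightarrow> 'a \<Rightarrow> 'b" where
  "pdiff [] g = g"
| "pdiff (v # vs) g = (\<lambda>y. frechet_derivative (pdiff vs g) (at y) v)"

definition C_inf :: "('a::real_normed_vector \<Rightarrow> 'b::real_normed_vector) \<Rightarrow> bool" where
  "C_inf g \<longleftrightarrow> (\<forall>vs. continuous_on UNIV (pdiff vs g) \<and> (\<forall>y. pdiff vs g differentiable (at y)))"

fun hderiv :: "nat \<Rightarrow> real set \<Rightarrow> (real \<Rightarrow> 'a::real_normed_vector) \<Rightarrow> real \<Rightarrow> 'a" where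
  "hderiv 0 S g = g"
| "hderiv (Suc k) S g = (\<lambda>t. vector_derivative (hderiv k S g) (at t within S))"

definition Ck :: "nat \<Rightarrow> real set \<Rightarrow> (real \<Rightarrow> 'a::real_normed_vector) \<Rightarrow> bool" where
  "Ck k S g \<longleftrightarrow>
     (\<forall>j<k. \<forall>t\<in>S. (hderiv j S g has_vector_derivative hderiv (Suc j) S g t) (at t within S))
   \<and> (\<forall>j\<le>k. continuous_on S (hderiv j S g))"

text \<open>Normalised piecewise derivative g^[k](s) = g^(k)(s)/k!, the derivative taken within
  the grid cell [a, a+h) containing s, where a = h * floor(s/h).\<close>
definition pw_deriv :: "real \<Rightarrow> nat \<Rightarrow> (real \<Rightarrow> 'a::real_normed_vector) \<Rightarrow> real \<Rightarrow> 'a" where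
  "pw_deriv h k g s =
     (let a = h * of_int \<lfloor>s / h\<rfloor> in (1 / fact k) *\<^sub>R hderiv k {a..<a+h} g s)"

definition Cp :: "real \<Rightarrow> nat \<Rightarrow> (nat \<Rightarrow> nat) \<Rightarrow> (real \<Rightarrow> 'a::real_normed_vector) \<Rightarrow> bool" where
  "Cp h p eta x \<longleftrightarrow>
     (\<forall>i\<in>{1..p}. \<exists>g. Ck (eta i + 1) {-(real i*h) .. -(real i*h) + h} g
                      \<and> (\<forall>s\<in>{-(real i*h) ..< -(real i*h) + h}. g s = x s))"

definition zfun :: "(real \<Rightarrow> 'a) \<Rightarrow> 'a" where
  "zfun x = x 0"

definition jfun :: "real \<Rightarrow> nat \<Rightarrow> nat \<Rightarrow> (real \<Rightarrow> 'a::real_normed_vector) \<Rightarrow> 'a" where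
  "jfun h i k x = pw_deriv h k x (-(real i*h))"

definition xifun :: "real \<Rightarrow> (nat \<Rightarrow> nat) \<Rightarrow> nat \<Rightarrow> (real \<Rightarrow> 'a::real_normed_vector) \<Rightarrow> real \<Rightarrow> 'a" where
  "xifun h eta i x s = pw_deriv h (eta i + 1) x (-(real i*h) + s)"

definition seg :: "(real \<Rightarrow> 'a) \<Rightarrow> real \<Rightarrow> real \<Rightarrow> 'a" where
  "seg x t = (\<lambda>s. x (t + s))"

definition is_solution ::
  "('a::real_normed_vector \<Rightarrow> 'a \<Rightarrow> 'a) \<Rightarrow> real \<Rightarrow> real \<Rightarrow> (real \<Rightarrow> 'a) \<Rightarrow> (real \<Rightarrow> 'a) \<Rightarrow> bool" where
  "is_solution f tau T x0 x \<longleftrightarrow>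
     (\<forall>s\<in>{-tau..0}. x s = x0 s)
   \<and> continuous_on {0..T} x
   \<and> (\<forall>t\<in>{0..<T}. (x has_vector_derivative f (x t) (x (t - tau))) (at_right t))"

definition is_box :: "(real ^ 'n) set \<Rightarrow> bool" where
  "is_box B \<longleftrightarrow> (\<exists>a b. (\<forall>i. a $ i \<le> b $ i) \<and> B = cbox a b)"

definition box_hull :: "(real ^ 'n) set \<Rightarrow> (real ^ 'n) set" where
  "box_hull A = \<Inter>{B. is_box B \<and> A \<subseteq> B}"

definition box_affine :: "'a::real_vector \<Rightarrow> real \<Rightarrow> 'a set \<Rightarrow> 'a set" where
  "box_affine v c B = (\<lambda>w. v + c *\<^sub>R w) ` B"

end

theory Submission
  imports Defs
begin


definition nbs :: "real set \<Rightarrow> bool" where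
  "nbs S \<longleftrightarrow> (\<forall>s\<in>S. at s within S \<noteq> bot)"

lemma nbs_Icc: "a < b \<Longrightarrow> nbs {a..b}"
  by (auto simp: nbs_def trivial_limit_within)

lemma nbs_Ico: "a < b \<Longrightarrow> nbs {a..<b}"
  by (auto simp: nbs_def trivial_limit_within)

lemma hderiv_Suc': "hderiv (Suc j) S g = hderiv j S (hderiv (Suc 0) S g)"
  by (induction j) auto

lemma vd_cong:
  assumes "\<forall>s\<in>S. f s = g s" "t \<in> S"
  shows "vector_derivative f (at t within S) = vector_derivative g (at t within S)"
proof -
  have "\<And>D. (f has_vector_derivative D) (at t within S) \<longleftrightarrow> (g has_vector_derivative D) (at t within S)"
    using assms by (metis has_vector_derivative_weaken order_refl)
  then show ?thesis unfolding vector_derivative_def by simp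
qed

lemma hderiv_cong:
  assumes "\<forall>s\<in>S. f s = g s"
  shows "\<forall>s\<in>S. hderiv j S f s = hderiv j S g s"
  using assms
proof (induction j)
  case 0 then show ?case by simp
next
  case (Suc j)
  then show ?case by (auto intro!: vd_cong)
qed

lemma Ck_cong:
  assumes "\<forall>s\<in>S. f s = g s"
  shows "Ck k S f \<longleftrightarrow> Ck k S g"
proof -
  have e: "\<And>j. \<forall>s\<in>S. hderiv j S f s = hderiv j S g s" using hderiv_cong[OF assms] by blast
  have d: "\<And>j t D. t \<in> S \<Longrightarrow> (hderiv j S f has_vector_derivative D) (at t within S) \<longleftrightarrow>
        (hderiv j S g has_vector_derivative D) (at t within S)"
    using e by (metis has_vector_derivative_weaken order_refl)
  have c: "\<And>j. continuous_on S (hderiv j S f) \<longleftrightarrow> continuous_on S (hderiv j S g)"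
    using e by (metis continuous_on_cong)
  show ?thesis unfolding Ck_def using d c e by (metis)
qed

lemma Ck_0: "Ck 0 S f \<longleftrightarrow> continuous_on S f"
  by (simp add: Ck_def)

lemma Ck_mono: "Ck k S f \<Longrightarrow> j \<le> k \<Longrightarrow> Ck j S f"
  by (auto simp: Ck_def)

lemma Ck_cont: "Ck k S f \<Longrightarrow> continuous_on S f"
  by (auto simp: Ck_def dest: spec[of _ 0])

lemma Ck_SucD:
  assumes "Ck (Suc k) S f"
  shows "\<forall>t\<in>S. (f has_vector_derivative hderiv (Suc 0) S f t) (at t within S)"
    "Ck k S (hderiv (Suc 0) S f)"
proof -
  show "\<forall>t\<in>S. (f has_vector_derivative hderiv (Suc 0) S f t) (at t within S)"
    using assms unfolding Ck_def by (metis hderiv.simps(1) zero_less_Suc)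
  show "Ck k S (hderiv (Suc 0) S f)"
    unfolding Ck_def
  proof safe
    fix j t assume "j < k" "t \<in> S"
    then have "(hderiv (Suc j) S f has_vector_derivative hderiv (Suc (Suc j)) S f t) (at t within S)"
      using assms unfolding Ck_def by (meson Suc_less_eq)
    then show "(hderiv j S (hderiv (Suc 0) S f) has_vector_derivative hderiv (Suc j) S (hderiv (Suc 0) S f) t) (at t within S)"
      by (simp only: hderiv_Suc'[of j S f] hderiv_Suc'[of "Suc j" S f])
  next
    fix j assume "j \<le> k"
    then have "continuous_on S (hderiv (Suc j) S f)"
      using assms unfolding Ck_def by (meson Suc_le_mono)
    then show "continuous_on S (hderiv j S (hderiv (Suc 0) S f))"
      by (simp only: hderiv_Suc'[of j S f])
  qed
qed

lemma Ck_SucI: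
  assumes "nbs S"
    and d: "\<forall>t\<in>S. (f has_vector_derivative f' t) (at t within S)"
    and "continuous_on S f" and "Ck k S f'"
  shows "Ck (Suc k) S f"
proof -
  have e: "\<forall>t\<in>S. hderiv (Suc 0) S f t = f' t"
    using assms unfolding nbs_def by (auto intro: vector_derivative_within)
  then have ck: "Ck k S (hderiv (Suc 0) S f)" using Ck_cong assms(4) by blast
  show ?thesis unfolding Ck_def
  proof safe
    fix j t assume "j < Suc k" "t \<in> S"
    then show "(hderiv j S f has_vector_derivative hderiv (Suc j) S f t) (at t within S)"
    proof (cases j)
      case 0 then show ?thesis using d e \<open>t\<in>S\<close> by simp
    next
      case (Suc j')
      have "(hderiv j' S (hderiv (Suc 0) S f) has_vector_derivative hderiv (Suc j') S (hderiv (Suc 0) S f) t) (at t within S)"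
        using ck \<open>j < Suc k\<close> \<open>t\<in>S\<close> Suc unfolding Ck_def by simp
      then show ?thesis using Suc
        by (simp only: hderiv_Suc'[of j' S f] hderiv_Suc'[of "Suc j'" S f])
    qed
  next
    fix j assume "j \<le> Suc k"
    then show "continuous_on S (hderiv j S f)"
    proof (cases j)
      case 0 then show ?thesis using assms by simp
    next
      case (Suc j')
      have "continuous_on S (hderiv j' S (hderiv (Suc 0) S f))"
        using ck \<open>j \<le> Suc k\<close> Suc unfolding Ck_def by simp
      then show ?thesis using Suc by (simp only: hderiv_Suc'[of j' S f])
    qed
  qed
qed



lemma Ck_const: "nbs S \<Longrightarrow> Ck k S (\<lambda>_. c)"
proof (induction k arbitrary: c)
  case 0 then show ?case by (simp add: Ck_0)
next
  case (Suc k)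
  have "Ck k S (\<lambda>_. 0::'a)" using Suc.IH Suc.prems by blast
  then show ?case using Suc.prems by (intro Ck_SucI[where f'="\<lambda>_. 0"]) auto
qed

lemma Ck_add: "nbs S \<Longrightarrow> Ck k S f \<Longrightarrow> Ck k S g \<Longrightarrow> Ck k S (\<lambda>s. f s + g s)"
proof (induction k arbitrary: f g)
  case 0 then show ?case by (simp add: Ck_0 continuous_on_add)
next
  case (Suc k)
  note f = Ck_SucD[OF Suc.prems(2)] and g = Ck_SucD[OF Suc.prems(3)]
  have "Ck k S (\<lambda>s. hderiv (Suc 0) S f s + hderiv (Suc 0) S g s)"
    using Suc.IH[OF Suc.prems(1) f(2) g(2)] .
  moreover have "continuous_on S (\<lambda>s. f s + g s)"
    using Ck_cont[OF Suc.prems(2)] Ck_cont[OF Suc.prems(3)] by (rule continuous_on_add)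
  ultimately show ?case
    using f g by (intro Ck_SucI[OF Suc.prems(1)]) (auto intro!: has_vector_derivative_add)
qed

lemma Ck_linear: "nbs S \<Longrightarrow> bounded_linear L \<Longrightarrow> Ck k S f \<Longrightarrow> Ck k S (\<lambda>s. L (f s))"
proof (induction k arbitrary: f)
  case 0 then show ?case
    by (simp add: Ck_0 bounded_linear.continuous_on)
next
  case (Suc k)
  note f = Ck_SucD[OF Suc.prems(3)]
  have "Ck k S (\<lambda>s. L (hderiv (Suc 0) S f s))"
    using Suc.IH[OF Suc.prems(1,2) f(2)] .
  moreover have "continuous_on S (\<lambda>s. L (f s))"
    using Suc.prems(2) Ck_cont[OF Suc.prems(3)] by (rule bounded_linear.continuous_on)
  ultimately show ?case
    using f bounded_linear.has_vector_derivative[OF Suc.prems(2)] by (intro Ck_SucI[OF Suc.prems(1)]) auto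
qed

lemma Ck_scaleR: "nbs S \<Longrightarrow> Ck k S (a::real\<Rightarrow>real) \<Longrightarrow> Ck k S g \<Longrightarrow> Ck k S (\<lambda>s. a s *\<^sub>R g s)"
proof (induction k arbitrary: a g)
  case 0 then show ?case by (simp add: Ck_0 continuous_on_scaleR)
next
  case (Suc k)
  note a = Ck_SucD[OF Suc.prems(2)] and g = Ck_SucD[OF Suc.prems(3)]
  have "Ck k S (\<lambda>s. a s *\<^sub>R hderiv (Suc 0) S g s)"
    using Suc.IH[OF Suc.prems(1) Ck_mono[OF Suc.prems(2)] g(2)] by simp
  moreover have "Ck k S (\<lambda>s. hderiv (Suc 0) S a s *\<^sub>R g s)"
    using Suc.IH[OF Suc.prems(1) a(2) Ck_mono[OF Suc.prems(3)]] by simp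
  ultimately have "Ck k S (\<lambda>s. a s *\<^sub>R hderiv (Suc 0) S g s + hderiv (Suc 0) S a s *\<^sub>R g s)"
    using Ck_add Suc.prems(1) by blast
  moreover have "continuous_on S (\<lambda>s. a s *\<^sub>R g s)"
    using Ck_cont[OF Suc.prems(2)] Ck_cont[OF Suc.prems(3)] by (rule continuous_on_scaleR)
  ultimately show ?case
    using a g by (intro Ck_SucI[OF Suc.prems(1)])
      (auto intro!: has_vector_derivative_scaleR simp: has_real_derivative_iff_has_vector_derivative)
qed

lemma Ck_sum: assumes "nbs S" "finite I" "\<And>i. i \<in> I \<Longrightarrow> Ck k S (f i)" shows "Ck k S (\<lambda>s. \<Sum>i\<in>I. f i s)"
  using assms(2,3)
proof (induction I rule: finite_induct)
  case empty then show ?case using assms(1) by (simp add: Ck_const)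
next
  case (insert x F)
  have "Ck k S (\<lambda>s. f x s + (\<Sum>i\<in>F. f i s))"
    using insert assms(1) by (intro Ck_add) auto
  then show ?case using insert by simp
qed

lemma Ck_pair: "nbs S \<Longrightarrow> Ck k S f \<Longrightarrow> Ck k S g \<Longrightarrow> Ck k S (\<lambda>s. (f s, g s))"
proof (induction k arbitrary: f g)
  case 0 then show ?case by (simp add: Ck_0 continuous_on_Pair)
next
  case (Suc k)
  note f = Ck_SucD[OF Suc.prems(2)] and g = Ck_SucD[OF Suc.prems(3)]
  have "Ck k S (\<lambda>s. (hderiv (Suc 0) S f s, hderiv (Suc 0) S g s))"
    using Suc.IH[OF Suc.prems(1) f(2) g(2)] .
  moreover have "continuous_on S (\<lambda>s. (f s, g s))"
    using Ck_cont[OF Suc.prems(2)] Ck_cont[OF Suc.prems(3)] by (rule continuous_on_Pair)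
  ultimately show ?case
    using f g by (intro Ck_SucI[OF Suc.prems(1)]) (auto intro!: has_vector_derivative_Pair)
qed

lemma pdiff_append: "pdiff vs (pdiff [b] g) = pdiff (vs @ [b]) g"
  by (induction vs) auto

lemma C_inf_pdiff: assumes "C_inf g" shows "C_inf (pdiff [b] g)"
  using assms unfolding C_inf_def pdiff_append by blast

lemma C_inf_diff: "C_inf g \<Longrightarrow> (g has_derivative frechet_derivative g (at y)) (at y)"
  unfolding C_inf_def by (metis frechet_derivative_works pdiff.simps(1))

lemma C_inf_cont: "C_inf g \<Longrightarrow> continuous_on UNIV g"
  unfolding C_inf_def by (metis pdiff.simps(1))

lemma Ck_comp:
  fixes g :: "'a::euclidean_space \<Rightarrow> 'b::real_normed_vector"
  assumes "nbs S"
  shows "C_inf g \<Longrightarrow> Ck k S \<gamma> \<Longrightarrow> Ck k S (\<lambda>s. g (\<gamma> s))"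
proof (induction k arbitrary: g \<gamma>)
  case 0 then show ?case
    using continuous_on_compose2[OF C_inf_cont[OF 0(1)], of S \<gamma>] by (simp add: Ck_0)
next
  case (Suc k)
  note gm = Ck_SucD[OF Suc.prems(2)]
  define D where "D = hderiv (Suc 0) S \<gamma>"
  define G where "G s = (\<Sum>b\<in>Basis. (D s \<bullet> b) *\<^sub>R pdiff [b] g (\<gamma> s))" for s
  have lin: "linear (frechet_derivative g (at y))" for y
    using C_inf_diff[OF Suc.prems(1)] has_derivative_linear by blast
  have Geq: "G s = frechet_derivative g (at (\<gamma> s)) (D s)" for s
  proof -
    have "frechet_derivative g (at (\<gamma> s)) (D s) = frechet_derivative g (at (\<gamma> s)) (\<Sum>b\<in>Basis. (D s \<bullet> b) *\<^sub>R b)"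
      by (simp add: euclidean_representation)
    also have "\<dots> = (\<Sum>b\<in>Basis. (D s \<bullet> b) *\<^sub>R frechet_derivative g (at (\<gamma> s)) b)"
      using lin[of "\<gamma> s"] by (simp add: linear_sum linear_scale)
    finally show ?thesis by (simp add: G_def)
  qed
  have "Ck k S G" unfolding G_def
  proof (rule Ck_sum[OF assms finite_Basis])
    fix b :: 'a assume "b \<in> Basis"
    have 1: "Ck k S (\<lambda>s. D s \<bullet> b)"
      using Ck_linear[OF assms bounded_linear_inner_left gm(2)] unfolding D_def .
    have 2: "Ck k S (\<lambda>s. pdiff [b] g (\<gamma> s))"
      using Suc.IH[OF C_inf_pdiff[OF Suc.prems(1)] Ck_mono[OF Suc.prems(2)]] by simp
    show "Ck k S (\<lambda>s. (D s \<bullet> b) *\<^sub>R pdiff [b] g (\<gamma> s))"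
      using Ck_scaleR[OF assms 1 2] .
  qed
  moreover have "((\<lambda>s. g (\<gamma> s)) has_vector_derivative G t) (at t within S)" if "t \<in> S" for t
  proof -
    have "(\<gamma> has_derivative (\<lambda>x. x *\<^sub>R D t)) (at t within S)"
      using gm that unfolding D_def has_vector_derivative_def by blast
    from diff_chain_within[OF this has_derivative_subset[OF C_inf_diff[OF Suc.prems(1)]]]
    have "((g \<circ> \<gamma>) has_derivative (frechet_derivative g (at (\<gamma> t)) \<circ> (\<lambda>x. x *\<^sub>R D t))) (at t within S)"
      by simp
    moreover have "(frechet_derivative g (at (\<gamma> t)) \<circ> (\<lambda>x. x *\<^sub>R D t)) = (\<lambda>x. x *\<^sub>R G t)"
      using lin[of "\<gamma> t"] by (auto simp: Geq linear_scale)
    ultimately show ?thesis unfolding has_vector_derivative_def o_def by simp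
  qed
  moreover have "continuous_on S (\<lambda>s. g (\<gamma> s))"
    using continuous_on_compose2[OF C_inf_cont[OF Suc.prems(1)] Ck_cont[OF Suc.prems(2)]] by simp
  ultimately show ?case by (intro Ck_SucI[OF assms]) auto
qed



lemma hderiv_restrict:
  assumes "nbs T" "T \<subseteq> S" "Ck k S g"
  shows "j \<le> k \<Longrightarrow> \<forall>s\<in>T. hderiv j T g s = hderiv j S g s"
proof (induction j)
  case 0 then show ?case by simp
next
  case (Suc j)
  show ?case
  proof
    fix s assume s: "s \<in> T"
    have "(hderiv j S g has_vector_derivative hderiv (Suc j) S g s) (at s within S)"
      using assms(2,3) Suc.prems s unfolding Ck_def by auto
    then have "(hderiv j T g has_vector_derivative hderiv (Suc j) S g s) (at s within T)"
      using has_vector_derivative_weaken[of "hderiv j S g" _ s S T "hderiv j T g"] s assms(2) Suc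
      by auto
    then show "hderiv (Suc j) T g s = hderiv (Suc j) S g s"
      using assms(1) s unfolding nbs_def by (simp add: vector_derivative_within)
  qed
qed

lemma Ck_restrict:
  assumes "nbs T" "T \<subseteq> S" "Ck k S g"
  shows "Ck k T g"
proof -
  note e = hderiv_restrict[OF assms]
  show ?thesis unfolding Ck_def
  proof safe
    fix j t assume j: "j < k" and t: "t \<in> T"
    have "(hderiv j S g has_vector_derivative hderiv (Suc j) S g t) (at t within S)"
      using assms(2,3) j t unfolding Ck_def by auto
    then have "(hderiv j T g has_vector_derivative hderiv (Suc j) S g t) (at t within T)"
      using has_vector_derivative_weaken[of "hderiv j S g" _ t S T "hderiv j T g"] t assms(2) e[of j] j
      by auto
    then show "(hderiv j T g has_vector_derivative hderiv (Suc j) T g t) (at t within T)"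
      using e[of "Suc j"] j t by simp
  next
    fix j assume j: "j \<le> k"
    have "continuous_on T (hderiv j S g)"
      using assms(2,3) j unfolding Ck_def by (auto intro: continuous_on_subset)
    then show "continuous_on T (hderiv j T g)"
      using e[OF j] by (metis continuous_on_cong)
  qed
qed

lemma vd_shift_iff:
  "(f has_vector_derivative D) (at (c+s) within S) \<longleftrightarrow>
   ((\<lambda>u. f (c+u)) has_vector_derivative D) (at s within {u. c+u \<in> S})"
proof -
  have fw: "((\<lambda>u. F (c'+u)) has_vector_derivative D') (at s' within {u. c'+u \<in> S'})"
    if "(F has_vector_derivative D') (at (c'+s') within S')" for F D' c' s' S'
  proof -
    have 1: "((\<lambda>u. c'+u) has_vector_derivative 1) (at s' within {u. c'+u \<in> S'})"
      by (auto intro!: derivative_eq_intros)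
    have im: "(\<lambda>u. c'+u) ` {u. c'+u \<in> S'} = S'"
      by (auto simp: image_iff intro!: exI[of _ "_ - c'"])
    show ?thesis using vector_diff_chain_within[OF 1, of F D'] that im by (simp add: o_def)
  qed
  show ?thesis
  proof
    assume "(f has_vector_derivative D) (at (c+s) within S)"
    then show "((\<lambda>u. f (c+u)) has_vector_derivative D) (at s within {u. c+u \<in> S})" by (rule fw)
  next
    assume "((\<lambda>u. f (c+u)) has_vector_derivative D) (at s within {u. c+u \<in> S})"
    then have "((\<lambda>u. f (c+u)) has_vector_derivative D) (at (-c + (c+s)) within {u. c+u \<in> S})" by simp
    from fw[OF this] show "(f has_vector_derivative D) (at (c+s) within S)" by simp
  qed
qed

lemma hderiv_shift:
  "\<forall>s. c+s \<in> S \<longrightarrow> hderiv j {u. c+u \<in> S} (\<lambda>u. f (c+u)) s = hderiv j S f (c+s)"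
proof (induction j)
  case 0 then show ?case by simp
next
  case (Suc j)
  show ?case
  proof safe
    fix s assume s: "c+s \<in> S"
    have "vector_derivative (hderiv j {u. c+u \<in> S} (\<lambda>u. f (c+u))) (at s within {u. c+u \<in> S})
        = vector_derivative (\<lambda>u. hderiv j S f (c+u)) (at s within {u. c+u \<in> S})"
      using Suc s by (intro vd_cong) auto
    also have "\<dots> = vector_derivative (hderiv j S f) (at (c+s) within S)"
      unfolding vector_derivative_def vd_shift_iff ..
    finally show "hderiv (Suc j) {u. c+u \<in> S} (\<lambda>u. f (c+u)) s = hderiv (Suc j) S f (c+s)" by simp
  qed
qed

lemma Ck_shift:
  assumes "Ck k S f"
  shows "Ck k {u. c+u \<in> S} (\<lambda>u. f (c+u))"
  unfolding Ck_def
proof safe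
  fix j t assume j: "j < k" and t: "c + t \<in> S"
  have "(hderiv j S f has_vector_derivative hderiv (Suc j) S f (c+t)) (at (c+t) within S)"
    using assms j t unfolding Ck_def by auto
  then have "((\<lambda>u. hderiv j S f (c+u)) has_vector_derivative hderiv (Suc j) S f (c+t)) (at t within {u. c+u \<in> S})"
    by (simp add: vd_shift_iff)
  then have "(hderiv j {u. c+u \<in> S} (\<lambda>u. f (c+u)) has_vector_derivative hderiv (Suc j) S f (c+t)) (at t within {u. c+u \<in> S})"
    using has_vector_derivative_weaken[of "\<lambda>u. hderiv j S f (c+u)" _ t "{u. c+u \<in> S}" "{u. c+u \<in> S}"] t
      hderiv_shift[of c S j f] by auto
  then show "(hderiv j {u. c+u \<in> S} (\<lambda>u. f (c+u)) has_vector_derivative hderiv (Suc j) {u. c+u \<in> S} (\<lambda>u. f (c+u)) t) (at t within {u. c+u \<in> S})"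
    using hderiv_shift[of c S "Suc j" f] t by simp
next
  fix j assume j: "j \<le> k"
  have c: "continuous_on S (hderiv j S f)" using assms j unfolding Ck_def by auto
  have "continuous_on {u. c+u \<in> S} (\<lambda>u. hderiv j S f (c+u))"
    by (rule continuous_on_compose2[OF c]) (auto intro!: continuous_intros)
  then show "continuous_on {u. c+u \<in> S} (hderiv j {u. c+u \<in> S} (\<lambda>u. f (c+u)))"
    using hderiv_shift[of c S j f] by (metis (no_types, lifting) continuous_on_cong mem_Collect_eq)
qed

lemma shift_Icc: "{u. c + u \<in> {a..b}} = {a-c..b-(c::real)}"
  by auto

lemma shift_Ico: "{u. c + u \<in> {a..<b}} = {a-c..<b-(c::real)}"
  by auto



lemma rderiv_zero_bound:
  fixes z :: "real \<Rightarrow> 'a::real_normed_vector"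
  assumes ab: "a \<le> b" and cont: "continuous_on {a..b} z"
    and der: "\<forall>s\<in>{a..<b}. (z has_vector_derivative 0) (at_right s)"
    and e: "e > 0"
  shows "\<forall>s\<in>{a..b}. norm (z s - z a) \<le> e * (s - a)"
proof -
  define B where "B = {s\<in>{a..b}. norm (z s - z a) \<le> e * (s - a)}"
  define A where "A = {s\<in>{a..b}. {a..s} \<subseteq> B}"
  define c where "c = Sup A"
  have aA: "a \<in> A" using ab by (auto simp: A_def B_def)
  have bdd: "bdd_above A" by (auto simp: A_def bdd_above_def)
  have Ane: "A \<noteq> {}" using aA by blast
  have ac: "a \<le> c" unfolding c_def using aA bdd by (rule cSup_upper)
  have cb: "c \<le> b" unfolding c_def using Ane by (rule cSup_least) (auto simp: A_def)
  have below: "u \<in> B" if au: "a \<le> u" and uc: "u < c" for u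
  proof -
    obtain s where "s \<in> A" "u < s" using less_cSup_iff[OF Ane bdd, of u] uc unfolding c_def by auto
    then show ?thesis using au by (auto simp: A_def)
  qed
  have cB: "c \<in> B"
  proof (cases "a = c")
    case True then show ?thesis using ab by (simp add: B_def)
  next
    case False
    then have ac': "a < c" using ac by simp
    let ?F = "at c within {a..<c}"
    have nb: "?F \<noteq> bot" using ac' by (simp add: trivial_limit_within)
    have "(z \<longlongrightarrow> z c) (at c within {a..b})"
      using cont ac cb unfolding continuous_on_def by auto
    then have t1: "(z \<longlongrightarrow> z c) ?F"
      by (rule tendsto_within_subset) (use cb in auto)
    have t2: "((\<lambda>u. norm (z u - z a)) \<longlongrightarrow> norm (z c - z a)) ?F"
      by (intro tendsto_intros t1)
    have t3: "((\<lambda>u. e * (u - a)) \<longlongrightarrow> e * (c - a)) ?F"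
      by (intro tendsto_intros)
    have "\<forall>u. u \<noteq> c \<longrightarrow> u \<in> {a..<c} \<longrightarrow> norm (z u - z a) \<le> e * (u - a)"
      using below unfolding B_def by simp
    then have ev: "eventually (\<lambda>u. norm (z u - z a) \<le> e * (u - a)) ?F"
      unfolding eventually_at_filter by (simp add: always_eventually)
    have "norm (z c - z a) \<le> e * (c - a)" using tendsto_le[OF nb t3 t2 ev] .
    then show ?thesis using ac cb by (simp add: B_def)
  qed
  have "{a..c} \<subseteq> B"
  proof
    fix u assume u: "u \<in> {a..c}"
    show "u \<in> B" proof (cases "u = c")
      case True then show ?thesis using cB by simp
    next
      case False then show ?thesis using below u by simp
    qed
  qed
  then have cA: "c \<in> A"
    using ac cb unfolding A_def by simp
  have "c = b"
  proof (rule ccontr)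
    assume "c \<noteq> b"
    then have cb': "c < b" using cb by simp
    have "(z has_derivative (\<lambda>h. h *\<^sub>R 0)) (at c within {c<..})"
      using der ac cb' by (auto simp: has_vector_derivative_def)
    then obtain d where d: "d > 0" and
      dd: "\<And>y. y \<in> {c<..} \<Longrightarrow> 0 < norm (y - c) \<Longrightarrow> norm (y - c) < d \<Longrightarrow>
          norm (z y - z c - (y - c) *\<^sub>R 0) / norm (y - c) < e"
      using e unfolding has_derivative_within' by meson
    define y where "y = min (c + d/2) b"
    have cy: "c < y" using d cb' by (simp add: y_def)
    have yb: "y \<le> b" by (simp add: y_def)
    have "{a..y} \<subseteq> B"
    proof
      fix u assume u: "u \<in> {a..y}"
      show "u \<in> B"
      proof (cases "u \<le> c")
        case True then show ?thesis using cA u by (auto simp: A_def)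
      next
        case False
        then have "norm (z u - z c) / norm (u - c) < e"
          using dd[of u] u d by (auto simp: y_def)
        then have "norm (z u - z c) < e * (u - c)"
          using False by (simp add: divide_less_eq)
        moreover have "norm (z c - z a) \<le> e * (c - a)" using cB by (simp add: B_def)
        moreover have "norm (z u - z a) \<le> norm (z u - z c) + norm (z c - z a)"
        proof -
          have "z u - z a = (z u - z c) + (z c - z a)" by simp
          then show ?thesis by (metis norm_triangle_ineq)
        qed
        ultimately have "norm (z u - z a) \<le> e * (u - a)" by (simp add: algebra_simps)
        then show ?thesis using u yb ac by (auto simp: B_def)
      qed
    qed
    then have "y \<in> A" using yb ac cy by (auto simp: A_def)
    then have "y \<le> c" unfolding c_def using bdd by (rule cSup_upper)
    then show False using cy by simp
  qed
  then have "{a..b} \<subseteq> B" using cA by (simp add: A_def)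
  then show ?thesis unfolding B_def by blast
qed

lemma rderiv_zero_const:
  fixes z :: "real \<Rightarrow> 'a::real_normed_vector"
  assumes ab: "a \<le> b" and cont: "continuous_on {a..b} z"
    and der: "\<forall>s\<in>{a..<b}. (z has_vector_derivative 0) (at_right s)"
  shows "\<forall>s\<in>{a..b}. z s = z a"
proof
  fix s assume s: "s \<in> {a..b}"
  show "z s = z a"
  proof (rule ccontr)
    assume ne: "z s \<noteq> z a"
    then have n: "norm (z s - z a) > 0" by simp
    then have sa: "s > a" using s by (cases "s = a") auto
    define e where "e = norm (z s - z a) / (2 * (s - a))"
    have e: "e > 0" using n sa by (simp add: e_def)
    have "norm (z s - z a) \<le> e * (s - a)" using rderiv_zero_bound[OF ab cont der e] s by blast
    also have "\<dots> = norm (z s - z a) / 2" using sa by (simp add: e_def field_simps)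
    finally show False using n by simp
  qed
qed



lemma dde_C1:
  fixes f :: "'a::euclidean_space \<Rightarrow> 'a \<Rightarrow> 'a" and x x0 :: "real \<Rightarrow> 'a"
  assumes fs: "C_inf (\<lambda>(u, v). f u v)" and tau: "tau > 0"
    and x0c: "continuous_on {-tau..0} x0" and sol: "is_solution f tau T x0 x"
  shows "continuous_on {-tau..T} x"
    and "continuous_on {0..T} (\<lambda>s. f (x s) (x (s - tau)))"
    and "0 \<le> T \<Longrightarrow> \<forall>s\<in>{0..T}. (x has_vector_derivative f (x s) (x (s - tau))) (at s within {0..T})"
proof -
  have eq0: "\<forall>s\<in>{-tau..0}. x s = x0 s" and xc0: "continuous_on {0..T} x"
    and rd: "\<forall>t\<in>{0..<T}. (x has_vector_derivative f (x t) (x (t - tau))) (at_right t)"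
    using sol unfolding is_solution_def by auto
  have "continuous_on {-tau..0} x" using x0c eq0 by (metis continuous_on_cong)
  then have "continuous_on ({-tau..0} \<union> {0..T}) x"
    using xc0 by (intro continuous_on_closed_Un) auto
  then show xc: "continuous_on {-tau..T} x"
    by (rule continuous_on_subset) auto
  define F where "F s = f (x s) (x (s - tau))" for s
  have pc: "continuous_on {0..T} (\<lambda>s. (x s, x (s - tau)))"
  proof (intro continuous_on_Pair xc0)
    show "continuous_on {0..T} (\<lambda>s. x (s - tau))"
      by (rule continuous_on_compose2[OF xc]) (auto intro!: continuous_intros simp: tau less_imp_le)
  qed
  have Fc: "continuous_on {0..T} F"
    using continuous_on_compose2[OF C_inf_cont[OF fs] pc] unfolding F_def by simp
  then show "continuous_on {0..T} (\<lambda>s. f (x s) (x (s - tau)))" unfolding F_def .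
  assume T0: "0 \<le> T"
  define y where "y s = x 0 + integral {0..s} F" for s
  have yd: "(y has_vector_derivative F s) (at s within {0..T})" if "s \<in> {0..T}" for s
    unfolding y_def using integral_has_vector_derivative[OF Fc that]
    by (simp add: has_vector_derivative_add_const add.commute[of "x 0"])
  have yc: "continuous_on {0..T} y"
  proof (subst continuous_on_eq_continuous_within, intro ballI)
    fix s assume "s \<in> {0..T}"
    show "continuous (at s within {0..T}) y" using has_vector_derivative_continuous[OF yd[OF \<open>s \<in> {0..T}\<close>]] .
  qed
  define z where "z s = x s - y s" for s
  have zc: "continuous_on {0..T} z" unfolding z_def using xc0 yc by (rule continuous_on_diff)
  have zd: "\<forall>s\<in>{0..<T}. (z has_vector_derivative 0) (at_right s)"
  proof
    fix s assume s: "s \<in> {0..<T}"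
    have "(y has_vector_derivative F s) (at s within {s..T})"
      using yd[of s] s by (auto intro: has_vector_derivative_within_subset)
    then have "(y has_vector_derivative F s) (at_right s)"
      using s by (simp add: at_within_Icc_at_right)
    moreover have "(x has_vector_derivative F s) (at_right s)" using rd s unfolding F_def by auto
    ultimately have "((\<lambda>s. x s - y s) has_vector_derivative F s - F s) (at_right s)"
      by (intro has_vector_derivative_diff)
    then show "(z has_vector_derivative 0) (at_right s)"
      unfolding z_def by simp
  qed
  have zz: "\<forall>s\<in>{0..T}. z s = z 0" by (rule rderiv_zero_const[OF T0 zc zd])
  have z0: "z 0 = 0" unfolding z_def y_def by simp
  have xy: "\<forall>s\<in>{0..T}. x s = y s"
  proof
    fix s assume "s \<in> {0..T}"
    then have "x s - y s = 0" using zz z0 unfolding z_def by metis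
    then show "x s = y s" by simp
  qed
  show "\<forall>s\<in>{0..T}. (x has_vector_derivative f (x s) (x (s - tau))) (at s within {0..T})"
  proof
    fix s assume s: "s \<in> {0..T}"
    show "(x has_vector_derivative f (x s) (x (s - tau))) (at s within {0..T})"
    proof -
      have "\<And>t. t \<in> {0..T} \<Longrightarrow> y t = x t" using xy by simp
      from has_vector_derivative_weaken[OF yd[OF s] s order_refl this]
      show ?thesis unfolding F_def .
    qed
  qed
qed

lemma dde_regular:
  fixes f :: "'a::euclidean_space \<Rightarrow> 'a \<Rightarrow> 'a" and x x0 :: "real \<Rightarrow> 'a"
  assumes fs: "C_inf (\<lambda>(u, v). f u v)" and tau: "tau > 0"
    and x0c: "continuous_on {-tau..0} x0" and sol: "is_solution f tau T x0 x"
  shows "(real k - 1) * tau \<le> a \<Longrightarrow> a < b \<Longrightarrow> b \<le> T \<Longrightarrow> Ck k {a..b} x"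
proof (induction k arbitrary: a b)
  case 0
  have "continuous_on {a..b} x"
    using dde_C1(1)[OF assms] by (rule continuous_on_subset) (use 0 in auto)
  then show ?case by (simp add: Ck_0)
next
  case (Suc k)
  have a0: "real k * tau \<le> a" using Suc.prems by simp
  have "0 \<le> a" using a0 tau by (meson mult_nonneg_nonneg of_nat_0_le_iff order_trans less_imp_le)
  then have T0: "0 \<le> T" using Suc.prems by simp
  have nb: "nbs {a..b}" using Suc.prems by (simp add: nbs_Icc)
  have ck1: "Ck k {a..b} x"
    using Suc.IH[of a b] Suc.prems a0 tau by (simp add: algebra_simps)
  have ckm: "Ck k {a-tau..b-tau} x"
    using Suc.IH[of "a-tau" "b-tau"] Suc.prems a0 tau by (simp add: algebra_simps)
  have ck2: "Ck k {a..b} (\<lambda>s. x (s - tau))"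
    using Ck_shift[OF ckm, of "-tau"] unfolding shift_Icc by simp
  have "Ck k {a..b} (\<lambda>s. (\<lambda>(u, v). f u v) (x s, x (s - tau)))"
    by (rule Ck_comp[OF nb fs Ck_pair[OF nb ck1 ck2]])
  then have ckF: "Ck k {a..b} (\<lambda>s. f (x s) (x (s - tau)))" by simp
  have d: "\<forall>s\<in>{a..b}. (x has_vector_derivative f (x s) (x (s - tau))) (at s within {a..b})"
  proof
    fix s assume s: "s \<in> {a..b}"
    have "(x has_vector_derivative f (x s) (x (s - tau))) (at s within {0..T})"
      using dde_C1(3)[OF assms T0] s \<open>0 \<le> a\<close> Suc.prems by auto
    then show "(x has_vector_derivative f (x s) (x (s - tau))) (at s within {a..b})"
      by (rule has_vector_derivative_within_subset) (use \<open>0 \<le> a\<close> Suc.prems in auto)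
  qed
  show ?case
    by (rule Ck_SucI[OF nb d Ck_cont[OF ck1] ckF])
qed



lemma box_integral:
  fixes v :: "real \<Rightarrow> real ^ 'n"
  assumes B: "is_box B" and vB: "\<forall>t\<in>{a..b}. v t \<in> B"
    and w0: "\<forall>t\<in>{a..b}. 0 \<le> w t" and wi: "(w has_integral W) {a..b}" and W: "W > 0"
    and I: "((\<lambda>t. w t *\<^sub>R v t) has_integral I) {a..b}"
  shows "\<exists>c\<in>B. I = W *\<^sub>R c"
proof -
  obtain lo hi where B': "B = cbox lo hi" using B unfolding is_box_def by blast
  have comp: "W * lo $ j \<le> I $ j \<and> I $ j \<le> W * hi $ j" for j
  proof -
    have Ij: "((\<lambda>t. w t * v t $ j) has_integral I $ j) {a..b}"
      using has_integral_linear[OF I bounded_linear_vec_nth[of j]] by (simp add: o_def)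
    have l: "((\<lambda>t. w t * lo $ j) has_integral W * lo $ j) {a..b}"
      using has_integral_mult_left[OF wi] .
    have h: "((\<lambda>t. w t * hi $ j) has_integral W * hi $ j) {a..b}"
      using has_integral_mult_left[OF wi] .
    have "\<forall>t\<in>{a..b}. lo $ j \<le> v t $ j \<and> v t $ j \<le> hi $ j"
      using vB unfolding B' mem_box_cart by blast
    then have le1: "\<And>t. t \<in> {a..b} \<Longrightarrow> w t * lo $ j \<le> w t * v t $ j"
      and le2: "\<And>t. t \<in> {a..b} \<Longrightarrow> w t * v t $ j \<le> w t * hi $ j"
      using w0 by (auto intro: mult_left_mono)
    show ?thesis using has_integral_le[OF l Ij le1] has_integral_le[OF Ij h le2] by simp
  qed
  define c where "c = (1 / W) *\<^sub>R I"
  have "c \<in> B" unfolding B' mem_box_cart c_def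
    using comp W by (auto simp: field_simps)
  moreover have "I = W *\<^sub>R c" using W by (simp add: c_def)
  ultimately show ?thesis by blast
qed

lemma weight_integral:
  fixes a b K :: real
  assumes ab: "a \<le> b" and p: "P > 0"
  shows "((\<lambda>t. (b - t) ^ (P - 1) / fact (P - 1) * K) has_integral ((b - a) ^ P / fact P * K)) {a..b}"
proof -
  define F where "F t = - ((b - t) ^ P / fact P * K)" for t
  have d: "(F has_vector_derivative (b - t) ^ (P - 1) / fact (P - 1) * K) (at t within {a..b})" for t
  proof -
    have "(F has_real_derivative (real P * (b - t) ^ (P - 1)) / fact P * K) (at t within {a..b})"
      unfolding F_def by (auto intro!: derivative_eq_intros)
    moreover have "(real P * (b - t) ^ (P - 1)) / fact P * K = (b - t) ^ (P - 1) / fact (P - 1) * K"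
    proof (cases P)
      case 0 then show ?thesis using p by simp
    next
      case (Suc n)
      have r: "real P > 0" using p by simp
      have f: "fact P = real P * fact (P - 1)" using Suc by (simp del: of_nat_Suc)
      show ?thesis unfolding f using r by simp
    qed
    ultimately show ?thesis by (simp add: has_real_derivative_iff_has_vector_derivative)
  qed
  have "F b - F a = (b - a) ^ P / fact P * K" using p by (simp add: F_def)
  then show ?thesis using fundamental_theorem_of_calculus[OF ab d] by simp
qed

lemma taylor_box:
  fixes g :: "real \<Rightarrow> real ^ 'n"
  assumes ck: "Ck N G g" and sub: "{a..a+eps} \<subseteq> G" and eps: "0 < eps" and k: "k < N"
    and B: "is_box B" and inB: "\<forall>t\<in>{a..a+eps}. (1 / fact N) *\<^sub>R hderiv N G g t \<in> B"
  shows "\<exists>c\<in>B. hderiv k G g (a+eps) =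
     (\<Sum>j<N-k. (eps ^ j / fact j) *\<^sub>R hderiv (k+j) G g a) + (eps ^ (N-k) / fact (N-k) * fact N) *\<^sub>R c"
proof -
  define P where "P = N - k"
  have P: "P > 0" using k by (simp add: P_def)
  define Df where "Df j = hderiv (k+j) G g" for j
  have Dfd: "(Df j has_vector_derivative Df (Suc j) t) (at t within {a..a+eps})"
    if "j < P" "a \<le> t" "t \<le> a+eps" for j t
  proof -
    have "(hderiv (k+j) G g has_vector_derivative hderiv (Suc (k+j)) G g t) (at t within G)"
      using ck that sub unfolding Ck_def P_def by auto
    then show ?thesis unfolding Df_def
      by (simp add: has_vector_derivative_within_subset[OF _ sub])
  qed
  have T: "((\<lambda>t. ((a+eps - t) ^ (P - 1) / fact (P - 1)) *\<^sub>R Df P t) has_integral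
      Df 0 (a+eps) - (\<Sum>i<P. ((a+eps-a) ^ i / fact i) *\<^sub>R Df i a)) {a..a+eps}"
    by (rule Taylor_has_integral[where f="Df 0"]) (use P Dfd eps in auto)
  define w where "w t = (a+eps - t) ^ (P - 1) / fact (P - 1) * fact N" for t
  define v where "v t = (1 / fact N) *\<^sub>R Df P t" for t
  have kP: "k + P = N" using k by (simp add: P_def)
  have "(\<lambda>t. ((a+eps - t) ^ (P - 1) / fact (P - 1)) *\<^sub>R Df P t) = (\<lambda>t. w t *\<^sub>R v t)"
    by (auto simp: w_def v_def fun_eq_iff)
  with T have T': "((\<lambda>t. w t *\<^sub>R v t) has_integral
      Df 0 (a+eps) - (\<Sum>i<P. (eps ^ i / fact i) *\<^sub>R Df i a)) {a..a+eps}" by simp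
  have wi: "(w has_integral (eps ^ P / fact P * fact N)) {a..a+eps}"
    using weight_integral[of a "a+eps" P "fact N"] eps P unfolding w_def by simp
  have w0: "\<forall>t\<in>{a..a+eps}. 0 \<le> w t" unfolding w_def by auto
  have vB: "\<forall>t\<in>{a..a+eps}. v t \<in> B" using inB kP unfolding v_def Df_def by simp
  have W: "eps ^ P / fact P * fact N > 0" using eps by simp
  obtain c where c: "c \<in> B" and "Df 0 (a+eps) - (\<Sum>i<P. (eps ^ i / fact i) *\<^sub>R Df i a) = (eps ^ P / fact P * fact N) *\<^sub>R c"
    using box_integral[OF B vB w0 wi W T'] by blast
  then have "hderiv k G g (a+eps) = (\<Sum>j<N-k. (eps ^ j / fact j) *\<^sub>R hderiv (k+j) G g a) + (eps ^ (N-k) / fact (N-k) * fact N) *\<^sub>R c"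
    unfolding Df_def P_def by (simp add: algebra_simps)
  then show ?thesis using c by blast
qed

lemma pw_cell:
  assumes h: "h > 0" and c: "c = of_int j * h" and u: "c \<le> u" "u < c + h"
  shows "h * of_int \<lfloor>u / h\<rfloor> = c"
proof -
  have "of_int j \<le> u / h" using u c h by (simp add: field_simps)
  moreover have "u / h < of_int j + 1" using u c h by (simp add: field_simps)
  ultimately have "\<lfloor>u / h\<rfloor> = j" by (rule floor_unique)
  then show ?thesis using c by simp
qed

lemma pw_deriv_cell:
  assumes h: "h > 0" and c: "c = of_int j * h" and u: "c \<le> u" "u < c + h"
  shows "pw_deriv h k g u = (1 / fact k) *\<^sub>R hderiv k {c..<c+h} g u"
  unfolding pw_deriv_def Let_def pw_cell[OF assms] ..

lemma box_hull_sub: "A \<subseteq> box_hull A"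
  unfolding box_hull_def by blast



lemma Icc_sub: "lo \<le> c + a \<Longrightarrow> c + b \<le> hi \<Longrightarrow> {a..b} \<subseteq> {u. c + u \<in> {lo..hi::real}}"
  by auto
lemma Ico_sub: "lo \<le> c + a \<Longrightarrow> c + b \<le> hi \<Longrightarrow> {a..<b} \<subseteq> {u. c + u \<in> {lo..hi::real}}"
  by auto
lemma Ico_sub_Icc: "lo \<le> a \<Longrightarrow> b \<le> hi \<Longrightarrow> {a..<b} \<subseteq> {lo..hi::real}"
  by auto

theorem mainTheorem2:
  fixes f :: "real ^ 'd \<Rightarrow> real ^ 'd \<Rightarrow> real ^ 'd"
    and tau h T eps :: real and p m :: nat
    and eta zeta zeta' :: "nat \<Rightarrow> nat"
    and x0 x :: "real \<Rightarrow> real ^ 'd"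
    and Xi' :: "(real ^ 'd) set"
    and Xi L R :: "nat \<Rightarrow> (real ^ 'd) set"
  assumes f_smooth: "C_inf (\<lambda>(u, v). f u v)"
    and tau_pos: "tau > 0" and p_pos: "p \<ge> 1" and h_def: "h = tau / real p"
    and x0_C: "Cp h p eta x0" and x0_cont: "continuous_on {-tau..0} x0"
    and sol: "is_solution f tau T x0 x"
    and eps: "0 < eps" "eps < h"
    and tT: "real m * h + eps + h \<le> T"
    and n_nonneg: "m div p \<ge> 1"
    and zeta: "Cp h p zeta (seg x (real m * h))" "\<forall>i\<in>{1..p}. zeta i \<ge> m div p - 1"
    and zeta': "Cp h p zeta' (seg x (real (m + 1) * h))"
    and Xi'_box: "is_box Xi'" "\<forall>s\<in>{0..<h}. xifun h zeta' 1 (seg x (real (m + 1) * h)) s \<in> Xi'"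
    and Xi_box: "\<forall>i\<in>{1..p}. is_box (Xi i) \<and>
                   (\<forall>s\<in>{0..<h}. xifun h zeta i (seg x (real m * h)) s \<in> Xi i)"
    and L_box: "\<forall>i\<in>{1..p}. is_box (L i) \<and>
                   (\<forall>s\<in>{(real m - real i) * h ..< (real m - real i + 1) * h}.
                       pw_deriv h (m div p) x s \<in> L i)"
    and R_box: "\<forall>i\<in>{1..p}. is_box (R i) \<and>
                   (\<forall>s\<in>{(real m - real i + 1) * h .. (real m - real i + 1) * h + eps}.
                       pw_deriv h (m div p) x s \<in> R i)"
  shows "let t = real m * h + eps; n = m div p - 1; xt = seg x t;
             xm = seg x (real m * h); xm1 = seg x (real (m + 1) * h) in
           (Cp h p (\<lambda>_. n) xt \<and> Ck (n + 1) {-tau..0} xt)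
         \<and> zfun xt \<in> box_affine (\<Sum>k = 0..zeta' 1. eps ^ k *\<^sub>R jfun h 1 k xm1)
                                 (eps ^ (zeta' 1 + 1)) Xi'
         \<and> (\<forall>i\<in>{1..p}. \<forall>k\<in>{0..n}.
               jfun h i k xt \<in>
                 box_affine (\<Sum>l = 0..zeta i - k. (real ((k + l) choose k) * eps ^ l) *\<^sub>R jfun h i (k + l) xm)
                            (real ((zeta i + 1) choose k) * eps ^ (zeta i + 1 - k)) (Xi i))
         \<and> (\<forall>i\<in>{1..p}. \<forall>s\<in>{0..<h}. xifun h (\<lambda>_. n) i xt s \<in> box_hull (L i \<union> R i))"
proof -
  define q where "q = m div p"
  define n where "n = q - 1"
  define t where "t = real m * h + eps"
  define xt where "xt = seg x t"
  define xm where "xm = seg x (real m * h)"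
  define xm1 where "xm1 = seg x (real (m + 1) * h)"
  have q1: "1 \<le> q" using n_nonneg q_def by simp
  have nq: "n + 1 = q" using q1 n_def by simp
  have hpos: "h > 0" using tau_pos p_pos h_def by simp
  have tau_eq: "tau = real p * h" using h_def p_pos by simp
  have "q * p \<le> m" unfolding q_def by (rule div_times_less_eq_dividend)
  then have "real q * real p \<le> real m" by (metis of_nat_le_iff of_nat_mult)
  then have mqh: "real q * tau \<le> real m * h" unfolding tau_eq using hpos
    by (metis mult.assoc mult_right_mono less_imp_le)
  have e1: "real (m + 1) * h = real m * h + h" by (simp add: algebra_simps)
  have tI: "t \<le> real (m+1) * h" using eps e1 unfolding t_def by simp
  have qt: "real q * tau \<le> t" using mqh eps unfolding t_def by simp
  have qtau: "(real q - 1) * tau = real q * tau - tau" by (simp add: algebra_simps)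
  define I where "I = {(real q - 1) * tau .. real (m+1) * h}"
  have Ireg: "Ck q I x" unfolding I_def
  proof (rule dde_regular[OF f_smooth tau_pos x0_cont sol])
    show "(real q - 1) * tau \<le> (real q - 1) * tau" by simp
    show "(real q - 1) * tau < real (m + 1) * h" using qtau mqh e1 hpos tau_pos by simp
    show "real (m + 1) * h \<le> T" using tT e1 eps by simp
  qed
  have restr: "hderiv j Tset (seg x c) s = hderiv j I x (c + s)"
    if "nbs Tset" "Tset \<subseteq> {u. c + u \<in> I}" "j \<le> q" "s \<in> Tset" for Tset c j s
  proof -
    have ck: "Ck q {u. c + u \<in> I} (seg x c)" using Ck_shift[OF Ireg, of c] unfolding seg_def .
    have "hderiv j Tset (seg x c) s = hderiv j {u. c + u \<in> I} (seg x c) s"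
      using hderiv_restrict[OF that(1,2) ck that(3)] that(4) by blast
    also have "\<dots> = hderiv j I x (c + s)"
      using hderiv_shift[of c I j x] that unfolding seg_def by auto
    finally show ?thesis .
  qed
  have ckseg: "Ck q Tset (seg x c)" if "nbs Tset" "Tset \<subseteq> {u. c + u \<in> I}" for Tset c
    using Ck_restrict[OF that Ck_shift[OF Ireg, of c]] unfolding seg_def .
  have ih_le: "real i * h \<le> tau" and ih_ge: "h \<le> real i * h" if "i \<in> {1..p}" for i
  proof -
    show "real i * h \<le> tau" unfolding tau_eq using that hpos by (intro mult_right_mono) auto
    show "h \<le> real i * h" using that hpos by (simp add: mult_le_cancel_right1)
  qed
  have A1: "Cp h p (\<lambda>_. n) xt" unfolding Cp_def
  proof
    fix i assume i: "i \<in> {1..p}"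
    have "Ck q {-(real i*h) .. -(real i*h) + h} xt" unfolding xt_def
    proof (rule ckseg)
      show "nbs {-(real i*h) .. -(real i*h) + h}" using hpos by (intro nbs_Icc) simp
      show "{-(real i*h) .. -(real i*h) + h} \<subseteq> {u. t + u \<in> I}"
        unfolding I_def by (rule Icc_sub) (use ih_le[OF i] ih_ge[OF i] qt tI qtau in linarith)+
    qed
    then show "\<exists>g. Ck ((\<lambda>_. n) i + 1) {-(real i*h) .. -(real i*h) + h} g \<and>
                 (\<forall>s\<in>{-(real i*h) ..< -(real i*h) + h}. g s = xt s)"
      using nq by auto
  qed
  have A2: "Ck (n + 1) {-tau..0} xt" unfolding nq xt_def
  proof (rule ckseg)
    show "nbs {-tau..0}" using tau_pos by (intro nbs_Icc) simp
    show "{-tau..0} \<subseteq> {u. t + u \<in> I}"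
      unfolding I_def by (rule Icc_sub) (use qt tI qtau in linarith)+
  qed
  have B: "zfun xt \<in> box_affine (\<Sum>k = 0..zeta' 1. eps ^ k *\<^sub>R jfun h 1 k xm1)
                                 (eps ^ (zeta' 1 + 1)) Xi'"
  proof -
    define N where "N = zeta' 1 + 1"
    have one: "1 \<in> {1..p}" using p_pos by simp
    obtain g1 where g1r: "Ck (zeta' 1 + 1) {-(real 1*h) .. -(real 1*h) + h} g1"
        "\<forall>s\<in>{-(real 1*h) ..< -(real 1*h) + h}. g1 s = seg x (real (m + 1) * h) s"
      using zeta'[unfolded Cp_def] one by blast
    have g1ck: "Ck N {-h..0} g1" using g1r(1) unfolding N_def by simp
    have g1eq: "\<forall>s\<in>{-h..<0}. xm1 s = g1 s" using g1r(2) unfolding xm1_def by simp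
    have cell: "hderiv j {-h..<0} xm1 t' = hderiv j {-h..0} g1 t'" if "j \<le> N" "t' \<in> {-h..<0}" for j t'
    proof -
      have "hderiv j {-h..<0} xm1 t' = hderiv j {-h..<0} g1 t'" using hderiv_cong[OF g1eq] that by blast
      also have "\<dots> = hderiv j {-h..0} g1 t'"
      proof -
        have sub: "{-h..<0} \<subseteq> {-h..(0::real)}" by auto
        show ?thesis using hderiv_restrict[OF nbs_Ico sub g1ck, of j] that hpos by auto
      qed
      finally show ?thesis .
    qed
    have pwc: "pw_deriv h j xm1 t' = (1 / fact j) *\<^sub>R hderiv j {-h..<0} xm1 t'" if "t' \<in> {-h..<0}" for j t'
      using pw_deriv_cell[OF hpos, of "-h" "-1" t' j xm1] that by simp
    have inB: "\<forall>t'\<in>{-h..-h+eps}. (1 / fact N) *\<^sub>R hderiv N {-h..0} g1 t' \<in> Xi'"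
    proof
      fix t' assume t': "t' \<in> {-h..-h+eps}"
      then have s: "t' + h \<in> {0..<h}" and t'': "t' \<in> {-h..<0}" using eps by auto
      have "xifun h zeta' 1 xm1 (t' + h) \<in> Xi'" using Xi'_box(2) s unfolding xm1_def by blast
      moreover have "xifun h zeta' 1 xm1 (t' + h) = pw_deriv h N xm1 t'" unfolding xifun_def N_def by simp
      ultimately show "(1 / fact N) *\<^sub>R hderiv N {-h..0} g1 t' \<in> Xi'"
        using pwc[OF t''] cell[OF order_refl t''] by simp
    qed
    have N0: "0 < N" unfolding N_def by simp
    obtain c where c: "c \<in> Xi'" and tay: "hderiv 0 {-h..0} g1 (-h+eps) =
       (\<Sum>j<N-0. (eps ^ j / fact j) *\<^sub>R hderiv (0+j) {-h..0} g1 (-h)) + (eps ^ (N-0) / fact (N-0) * fact N) *\<^sub>R c"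
      using taylor_box[OF g1ck _ eps(1) N0 Xi'_box(1) inB] eps by auto
    have zx: "zfun xt = g1 (-h+eps)"
    proof -
      have "zfun xt = x t" unfolding zfun_def xt_def seg_def by simp
      also have "\<dots> = xm1 (-h+eps)" unfolding xm1_def seg_def t_def e1 by simp
      also have "\<dots> = g1 (-h+eps)" using g1eq eps by auto
      finally show ?thesis .
    qed
    have sumeq: "(\<Sum>k = 0..zeta' 1. eps ^ k *\<^sub>R jfun h 1 k xm1) =
        (\<Sum>j<N. (eps ^ j / fact j) *\<^sub>R hderiv j {-h..0} g1 (-h))"
    proof -
      have "{0..zeta' 1} = {..<N}" unfolding N_def by auto
      moreover have "eps ^ k *\<^sub>R jfun h 1 k xm1 = (eps ^ k / fact k) *\<^sub>R hderiv k {-h..0} g1 (-h)"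
        if "k \<in> {..<N}" for k
      proof -
        have "jfun h 1 k xm1 = pw_deriv h k xm1 (-h)" unfolding jfun_def by simp
        also have "\<dots> = (1 / fact k) *\<^sub>R hderiv k {-h..0} g1 (-h)"
          using pwc[of "-h" k] cell[of k "-h"] that hpos by simp
        finally show ?thesis by simp
      qed
      ultimately show ?thesis by (auto intro: sum.cong)
    qed
    have "zfun xt = (\<Sum>k = 0..zeta' 1. eps ^ k *\<^sub>R jfun h 1 k xm1) + eps ^ (zeta' 1 + 1) *\<^sub>R c"
      using tay unfolding zx sumeq N_def by simp
    then show ?thesis unfolding box_affine_def using c by blast
  qed
  have C: "\<forall>i\<in>{1..p}. \<forall>k\<in>{0..n}.
               jfun h i k xt \<in>
                 box_affine (\<Sum>l = 0..zeta i - k. (real ((k + l) choose k) * eps ^ l) *\<^sub>R jfun h i (k + l) xm)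
                            (real ((zeta i + 1) choose k) * eps ^ (zeta i + 1 - k)) (Xi i)"
  proof (intro ballI)
    fix i k assume i: "i \<in> {1..p}" and k: "k \<in> {0..n}"
    define N where "N = zeta i + 1"
    define a where "a = -(real i*h)"
    have kz: "k \<le> zeta i" using zeta(2) i k unfolding n_def q_def by fastforce
    have kN: "k < N" using kz unfolding N_def by simp
    obtain g where gr: "Ck (zeta i + 1) {-(real i*h) .. -(real i*h) + h} g"
        "\<forall>s\<in>{-(real i*h) ..< -(real i*h) + h}. g s = seg x (real m * h) s"
      using zeta(1)[unfolded Cp_def] i by blast
    have gck: "Ck N {a..a+h} g" using gr(1) unfolding N_def a_def .
    have geq: "\<forall>s\<in>{a..<a+h}. xm s = g s" using gr(2) unfolding xm_def a_def by simp
    have cell: "hderiv j {a..<a+h} xm t' = hderiv j {a..a+h} g t'" if "j \<le> N" "t' \<in> {a..<a+h}" for j t'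
    proof -
      have "hderiv j {a..<a+h} xm t' = hderiv j {a..<a+h} g t'" using hderiv_cong[OF geq] that by blast
      also have "\<dots> = hderiv j {a..a+h} g t'"
      proof -
        have sub: "{a..<a+h} \<subseteq> {a..a+h}" by auto
        show ?thesis using hderiv_restrict[OF nbs_Ico sub gck, of j] that hpos by auto
      qed
      finally show ?thesis .
    qed
    have pwc: "pw_deriv h j y t' = (1 / fact j) *\<^sub>R hderiv j {a..<a+h} y t'" if "t' \<in> {a..<a+h}" for j t' and y :: "real \<Rightarrow> real ^ 'd"
      using pw_deriv_cell[OF hpos, of a "- int i" t' j y] that unfolding a_def by simp
    have inB: "\<forall>t'\<in>{a..a+eps}. (1 / fact N) *\<^sub>R hderiv N {a..a+h} g t' \<in> Xi i"
    proof
      fix t' assume t': "t' \<in> {a..a+eps}"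
      then have s: "t' - a \<in> {0..<h}" and t'': "t' \<in> {a..<a+h}" using eps by auto
      have "xifun h zeta i xm (t' - a) \<in> Xi i" using Xi_box i s unfolding xm_def by blast
      moreover have "xifun h zeta i xm (t' - a) = pw_deriv h N xm t'" unfolding xifun_def N_def a_def by simp
      ultimately show "(1 / fact N) *\<^sub>R hderiv N {a..a+h} g t' \<in> Xi i"
        using pwc[OF t''] cell[OF order_refl t''] by simp
    qed
    have XiB: "is_box (Xi i)" using Xi_box i by blast
    obtain c where c: "c \<in> Xi i" and tay: "hderiv k {a..a+h} g (a+eps) =
       (\<Sum>j<N-k. (eps ^ j / fact j) *\<^sub>R hderiv (k+j) {a..a+h} g a) + (eps ^ (N-k) / fact (N-k) * fact N) *\<^sub>R c"
      using taylor_box[OF gck _ eps(1) kN XiB inB] eps by auto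
    have csub: "{a..<a+h} \<subseteq> {u. t + u \<in> I}"
      unfolding I_def a_def by (rule Ico_sub) (use ih_le[OF i] ih_ge[OF i] qt tI qtau in linarith)+
    have msub: "{a..<a+h} \<subseteq> {u. real m * h + u \<in> I}"
      unfolding I_def a_def by (rule Ico_sub) (use ih_le[OF i] ih_ge[OF i] mqh e1 qtau hpos in linarith)+
    have kq: "k \<le> q" using k nq by simp
    have aC: "a \<in> {a..<a+h}" "a + eps \<in> {a..<a+h}" using hpos eps by auto
    have lhs: "jfun h i k xt = (1 / fact k) *\<^sub>R hderiv k {a..a+h} g (a+eps)"
    proof -
      have "jfun h i k xt = (1 / fact k) *\<^sub>R hderiv k {a..<a+h} xt a"
        unfolding jfun_def using pwc[OF aC(1)] unfolding a_def by simp
      also have "hderiv k {a..<a+h} xt a = hderiv k I x (t + a)"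
        unfolding xt_def by (rule restr[OF nbs_Ico csub kq aC(1)]) (use hpos in simp)
      also have "\<dots> = hderiv k {a..<a+h} xm (a + eps)"
        unfolding xm_def by (subst restr[OF nbs_Ico msub kq aC(2)]) (use hpos in \<open>simp_all add: t_def algebra_simps\<close>)
      also have "\<dots> = hderiv k {a..a+h} g (a+eps)" using cell[OF _ aC(2)] kN by simp
      finally show ?thesis .
    qed
    have jm: "jfun h i (k+l) xm = (1 / fact (k+l)) *\<^sub>R hderiv (k+l) {a..a+h} g a" if "k + l \<le> N" for l
      unfolding jfun_def using pwc[OF aC(1)] cell[OF that aC(1)] unfolding a_def by simp
    have sumeq: "(\<Sum>l = 0..zeta i - k. (real ((k + l) choose k) * eps ^ l) *\<^sub>R jfun h i (k + l) xm) =
        (1 / fact k) *\<^sub>R (\<Sum>j<N-k. (eps ^ j / fact j) *\<^sub>R hderiv (k+j) {a..a+h} g a)"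
    proof -
      have set: "{0..zeta i - k} = {..<N-k}" using kz unfolding N_def by auto
      have "(real ((k + l) choose k) * eps ^ l) *\<^sub>R jfun h i (k + l) xm =
            (1 / fact k) *\<^sub>R ((eps ^ l / fact l) *\<^sub>R hderiv (k+l) {a..a+h} g a)" if "l \<in> {..<N-k}" for l
      proof -
        have "k + l \<le> N" using that by simp
        moreover have "real ((k + l) choose k) = fact (k+l) / (fact k * fact l)"
          using binomial_fact[of k "k+l"] by simp
        ultimately show ?thesis using jm[of l] by (simp add: field_simps)
      qed
      then show ?thesis unfolding set scaleR_sum_right by (rule sum.cong[OF refl])
    qed
    have remeq: "(1 / fact k) * (eps ^ (N-k) / fact (N-k) * fact N) = real ((zeta i + 1) choose k) * eps ^ (zeta i + 1 - k)"
    proof -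
      have "real (N choose k) = fact N / (fact k * fact (N-k))" using binomial_fact[of k N] kN by simp
      then show ?thesis unfolding N_def[symmetric] by (simp add: field_simps)
    qed
    have "jfun h i k xt = (\<Sum>l = 0..zeta i - k. (real ((k + l) choose k) * eps ^ l) *\<^sub>R jfun h i (k + l) xm)
        + (real ((zeta i + 1) choose k) * eps ^ (zeta i + 1 - k)) *\<^sub>R c"
      unfolding lhs tay sumeq remeq[symmetric] by (simp add: scaleR_add_right)
    then show "jfun h i k xt \<in> box_affine (\<Sum>l = 0..zeta i - k. (real ((k + l) choose k) * eps ^ l) *\<^sub>R jfun h i (k + l) xm)
                            (real ((zeta i + 1) choose k) * eps ^ (zeta i + 1 - k)) (Xi i)"
      unfolding box_affine_def using c by blast
  qed
  have D: "\<forall>i\<in>{1..p}. \<forall>s\<in>{0..<h}. xifun h (\<lambda>_. n) i xt s \<in> box_hull (L i \<union> R i)"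
  proof (intro ballI)
    fix i s assume i: "i \<in> {1..p}" and s: "s \<in> {0..<h}"
    define v where "v = -(real i*h) + s"
    define u where "u = t + v"
    have "xifun h (\<lambda>_. n) i xt s = pw_deriv h q xt v"
      unfolding xifun_def v_def nq ..
    also have "\<dots> = (1 / fact q) *\<^sub>R hderiv q {-(real i*h) ..< -(real i*h) + h} xt v"
      by (rule pw_deriv_cell[OF hpos, of _ "- int i"]) (use s in \<open>auto simp: v_def\<close>)
    also have "hderiv q {-(real i*h) ..< -(real i*h) + h} xt v = hderiv q I x u"
      unfolding xt_def u_def
    proof (rule restr)
      show "nbs {-(real i*h) ..< -(real i*h) + h}" using hpos by (intro nbs_Ico) simp
      show "{-(real i*h) ..< -(real i*h) + h} \<subseteq> {u. t + u \<in> I}"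
        unfolding I_def by (rule Ico_sub) (use ih_le[OF i] ih_ge[OF i] qt tI qtau in linarith)+
    qed (use s in \<open>auto simp: v_def\<close>)
    finally have lhs: "xifun h (\<lambda>_. n) i xt s = (1 / fact q) *\<^sub>R hderiv q I x u" .
    have hm: "(real m - real i) * h = real m * h - real i * h" by (simp add: algebra_simps)
    have hm1: "(real m - real i + 1) * h = real m * h - real i * h + h" by (simp add: algebra_simps)
    have uu: "u = real m * h - real i * h + eps + s" unfolding u_def v_def t_def by simp
    have L': "L i \<union> R i \<subseteq> box_hull (L i \<union> R i)" by (rule box_hull_sub)
    show "xifun h (\<lambda>_. n) i xt s \<in> box_hull (L i \<union> R i)"
    proof (cases "u < (real m - real i + 1) * h")
      case True
      define c where "c = (real m - real i) * h"
      have uc: "c \<le> u" "u < c + h" using True eps s unfolding c_def hm hm1 uu by auto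
      have "pw_deriv h q x u \<in> L i" using L_box i uc True unfolding q_def c_def by auto
      moreover have "pw_deriv h q x u = (1 / fact q) *\<^sub>R hderiv q {c..<c+h} x u"
        by (rule pw_deriv_cell[OF hpos, of _ "int m - int i"]) (use uc in \<open>auto simp: c_def\<close>)
      moreover have "hderiv q {c..<c+h} x u = hderiv q I x u"
      proof (rule hderiv_restrict[OF _ _ Ireg, rule_format])
        show "nbs {c..<c+h}" using hpos by (intro nbs_Ico) simp
        show "{c..<c+h} \<subseteq> I" unfolding I_def c_def hm
          by (rule Ico_sub_Icc) (use ih_le[OF i] ih_ge[OF i] qt qtau mqh e1 hpos in linarith)+
      qed (use uc in auto)
      ultimately show ?thesis using lhs L' by auto
    next
      case False
      define c where "c = (real m - real i + 1) * h"
      have uc: "c \<le> u" "u \<le> c + eps" "u < c + h" using False eps s unfolding c_def hm hm1 uu by auto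
      have "pw_deriv h q x u \<in> R i" using R_box i uc unfolding q_def c_def by auto
      moreover have "pw_deriv h q x u = (1 / fact q) *\<^sub>R hderiv q {c..<c+h} x u"
        by (rule pw_deriv_cell[OF hpos, of _ "int m - int i + 1"]) (use uc in \<open>auto simp: c_def\<close>)
      moreover have "hderiv q {c..<c+h} x u = hderiv q I x u"
      proof (rule hderiv_restrict[OF _ _ Ireg, rule_format])
        show "nbs {c..<c+h}" using hpos by (intro nbs_Ico) simp
        show "{c..<c+h} \<subseteq> I" unfolding I_def c_def hm1
          by (rule Ico_sub_Icc) (use ih_le[OF i] ih_ge[OF i] qt qtau mqh e1 hpos in linarith)+
      qed (use uc in auto)
      ultimately show ?thesis using lhs L' by auto
    qed
  qed
  show ?thesis unfolding Let_def using A1 A2 B C D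
    unfolding n_def q_def t_def xt_def xm_def xm1_def by blast
qed

end
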